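(* Let $\mathcal C$ be a Suslin scheme in a topological space $Y$ consisting of closed subsets of $Y$, and let $T$ be a nonempty well-founded tree with leaf rank $r_l(T)=\lambda+n$ ($\lambda$ limit or $0$, $n\in\omega$). Then (i) $\mathbf R_T(\mathcal C)\in\mathcal F_{\lambda+2n}(Y)$; (ii) if $T\ne\{\emptyset\}$ and $\mathrm{ims}_T(\emptyset)$ is finite, then $n\ge1$ and $\mathbf R_T(\mathcal C)\in\mathcal F_{\lambda+2n-1}(Y)$.
   Context: $\mathcal F$-Borel hierarchy: $\mathcal F_0(Y)$ closed sets; for $0<\alpha<\omega_1$, $\mathcal F_\alpha(Y)$ = countable unions (odd $\alpha$) or countable intersections (even $\alpha$) of members of $\bigcup_{\beta<\alpha}\mathcal F_\beta(Y)$, with $\lambda+m$ ($\lambda$ limit or 0) having the parity of $m$. A tree is a subset of $\omega^{<\omega}$ closed under initial segments, well-founded if it has no infinite branch; $\mathrm{ims}_T(t)=\{t^\frown n\in T\}$, $T^t=\{t':t^\frown t'\in T\}$; leaf rank $r_l(T^t)=\sup\{r_l(T^s)+1:s\in\mathrm{ims}_T(t)\}$ ($\sup\emptyset=0$), $r_l(T)=r_l(T^\emptyset)$. A Suslin scheme is a family $(C(s))_{s\in\omega^{<\omega}}$ with $C(t)\subset C(s)$ whenever $t$ extends $s$. A map $\varphi:T\to\omega^{<\omega}$ is admissible if it is monotone w.r.t. extension and $|\varphi(t)|=t(0)+\dots+t(k)$ for $t=(t(0),\dots,t(k))$. $\mathbf R_T(\mathcal C)=\{x\in C(\emptyset):\exists$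 admissible $\varphi:T\to\omega^{<\omega}$ with $x\in C(\varphi(t))$ for all $t\in T\}$. *)

theory Defs
  imports Complex_Main
begin

text \<open>W is the cardinal successor of aleph_0 as a well-order (an initial ordinal);
its field, ordered by W, is a copy of omega_1. Ordinals below omega_1 are
represented by the elements of Field W.\<close>

definition W :: "nat set rel" where
  "W = cardSuc natLeq"

type_synonym ord1 = "nat set"

definition oless :: "ord1 \<Rightarrow> ord1 \<Rightarrow> bool" where
  "oless a b \<longleftrightarrow> (a, b) \<in> W \<and> a \<noteq> b"

definition ozero :: ord1 where
  "ozero = wo_rel.minim W (Field W)"

definition osucc :: "ord1 \<Rightarrow> ord1" where
  "osucc a = wo_rel.suc W {a}"

text \<open>supremum (least upper bound); sup of the empty set is 0\<close>
definition osup :: "ord1 set \<Rightarrow> ord1" where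
  "osup A = wo_rel.supr W A"

definition oadd_nat :: "ord1 \<Rightarrow> nat \<Rightarrow> ord1" where
  "oadd_nat a n = (osucc ^^ n) a"

definition limit_or_zero :: "ord1 \<Rightarrow> bool" where
  "limit_or_zero l \<longleftrightarrow> l \<in> Field W \<and> (\<forall>b \<in> Field W. osucc b \<noteq> l)"

definition oeven :: "ord1 \<Rightarrow> bool" where
  "oeven a \<longleftrightarrow> (\<exists>l m. limit_or_zero l \<and> a = oadd_nat l m \<and> even m)"

definition Fclass :: "ord1 \<Rightarrow> 'a::topological_space set set" where
  "Fclass a0 = wfrec (W - Id)
     (\<lambda>g a. if a = ozero then {A. closed A}
            else if oeven a
              then {\<Inter>(range f) | f :: nat \<Rightarrow> 'a set. \<forall>k. f k \<in> \<Union>(g ` {b. oless b a})}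
              else {\<Union>(range f) | f :: nat \<Rightarrow> 'a set. \<forall>k. f k \<in> \<Union>(g ` {b. oless b a})}) a0"

definition extends :: "nat list \<Rightarrow> nat list \<Rightarrow> bool" where
  "extends t s \<longleftrightarrow> (\<exists>u. t = s @ u)"

definition is_tree :: "nat list set \<Rightarrow> bool" where
  "is_tree T \<longleftrightarrow> (\<forall>t \<in> T. \<forall>s. extends t s \<longrightarrow> s \<in> T)"

definition well_founded_tree :: "nat list set \<Rightarrow> bool" where
  "well_founded_tree T \<longleftrightarrow> \<not> (\<exists>x :: nat \<Rightarrow> nat. \<forall>k. map x [0..<k] \<in> T)"

definition ims :: "nat list set \<Rightarrow> nat list \<Rightarrow> nat list set" where
  "ims T t = {t @ [n] | n. t @ [n] \<in> T}"

definition subtree :: "nat list set \<Rightarrow> nat list \<Rightarrow> nat list set" where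
  "subtree T t = {t'. t @ t' \<in> T}"

text \<open>one-step extension relation on nodes of T (well-founded iff T is)\<close>
definition child_rel :: "nat list set \<Rightarrow> (nat list \<times> nat list) set" where
  "child_rel T = {(t @ [n], t) | t n. t @ [n] \<in> T}"

text \<open>node_rank T t = r_l(T^t) = sup { r_l(T^s) + 1 : s in ims_T(t) }\<close>
definition node_rank :: "nat list set \<Rightarrow> nat list \<Rightarrow> ord1" where
  "node_rank T = wfrec (child_rel T) (\<lambda>g t. osup ((\<lambda>s. osucc (g s)) ` ims T t))"

definition leaf_rank :: "nat list set \<Rightarrow> ord1" where
  "leaf_rank T = node_rank T []"

definition suslin_scheme :: "(nat list \<Rightarrow> 'a set) \<Rightarrow> bool" where
  "suslin_scheme C \<longleftrightarrow> (\<forall>s t. extends t s \<longrightarrow> C t \<subseteq> C s)"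

definition admissible :: "nat list set \<Rightarrow> (nat list \<Rightarrow> nat list) \<Rightarrow> bool" where
  "admissible T \<phi> \<longleftrightarrow>
     (\<forall>s \<in> T. \<forall>t \<in> T. extends t s \<longrightarrow> extends (\<phi> t) (\<phi> s)) \<and>
     (\<forall>t \<in> T. length (\<phi> t) = sum_list t)"

definition R_op :: "nat list set \<Rightarrow> (nat list \<Rightarrow> 'a set) \<Rightarrow> 'a set" where
  "R_op T C = {x \<in> C []. \<exists>\<phi>. admissible T \<phi> \<and> (\<forall>t \<in> T. x \<in> C (\<phi> t))}"

end

theory Submission imports Defs "HOL-Library.Countable_Set" begin
unbundle cardinal_syntax

lemma wo: "wo_rel W"
  unfolding W_def wo_rel_def using cardSuc_Card_order[OF natLeq_Card_order]
  by (simp add: card_order_on_def)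

lemma Field_inf: "\<not> finite (Field W)"
  using Cinfinite_cardSuc[OF natLeq_Cinfinite] unfolding W_def cinfinite_def by simp

lemma CO: "Card_order W" unfolding W_def using cardSuc_Card_order[OF natLeq_Card_order] .

lemma regW: "regularCard W"
  unfolding W_def by (rule regularCard_cardSuc[OF natLeq_Cinfinite])

lemma countable_le: "countable A \<Longrightarrow> |A| \<le>o natLeq"
  unfolding countable_def card_of_ordLeq[symmetric]
  using card_of_nat ordLeq_ordIso_trans  by (metis card_of_ordLeq top_greatest)

lemma bounded:
  assumes "A \<subseteq> Field W" "countable A"
  shows "\<exists>b\<in>Field W. \<forall>a\<in>A. (a,b) \<in> W"
proof (rule ccontr)
  assume H: "\<not> ?thesis"
  have "cofinal A W" unfolding cofinal_def
  proof
    fix a assume a: "a \<in> Field W"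
    then obtain b where "b\<in>A" "(b,a) \<notin> W" using H by blast
    moreover then have "b \<in> Field W" using assms by auto
    ultimately show "\<exists>b\<in>A. a \<noteq> b \<and> (a, b) \<in> W"
      using wo a unfolding wo_rel_def well_order_on_def linear_order_on_def total_on_def
        partial_order_on_def preorder_on_def refl_on_def by metis
  qed
  then have "|A| =o W" using regW assms(1) unfolding regularCard_def by blast
  moreover have "|A| <o W" using countable_le[OF assms(2)]
    cardSuc_greater[OF natLeq_Card_order] unfolding W_def using ordLeq_ordLess_trans by blast
  ultimately show False using not_ordLess_ordIso by blast
qed

lemma Wrefl: "a \<in> Field W \<Longrightarrow> (a,a) \<in> W"
  using wo unfolding wo_rel_def well_order_on_def linear_order_on_def
        partial_order_on_def preorder_on_def refl_on_def by blast
lemma Wtrans: "(a,b) \<in> W \<Longrightarrow> (b,c) \<in> W \<Longrightarrow> (a,c) \<in> W"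
  using wo unfolding wo_rel_def well_order_on_def linear_order_on_def
        partial_order_on_def preorder_on_def trans_def by blast
lemma Wantisym: "(a,b) \<in> W \<Longrightarrow> (b,a) \<in> W \<Longrightarrow> a = b"
  using wo unfolding wo_rel_def well_order_on_def linear_order_on_def
        partial_order_on_def antisym_def by blast
lemma Wtotal: "a \<in> Field W \<Longrightarrow> b \<in> Field W \<Longrightarrow> (a,b) \<in> W \<or> (b,a) \<in> W"
  using wo Wrefl unfolding wo_rel_def well_order_on_def linear_order_on_def total_on_def
  by metis
lemma WF1: "(a,b) \<in> W \<Longrightarrow> a \<in> Field W" by (rule FieldI1)
lemma WF2: "(a,b) \<in> W \<Longrightarrow> b \<in> Field W" by (rule FieldI2)

lemma oless_trans: "oless a b \<Longrightarrow> oless b c \<Longrightarrow> oless a c"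
  unfolding oless_def using Wtrans Wantisym by blast
lemma oless_le_trans: "oless a b \<Longrightarrow> (b,c) \<in> W \<Longrightarrow> oless a c"
  unfolding oless_def using Wtrans Wantisym by blast
lemma le_oless_trans: "(a,b) \<in> W \<Longrightarrow> oless b c \<Longrightarrow> oless a c"
  unfolding oless_def using Wtrans Wantisym by blast
lemma oless_irrefl: "\<not> oless a a" unfolding oless_def by simp
lemma not_le_oless: "a \<in> Field W \<Longrightarrow> b \<in> Field W \<Longrightarrow> (a,b) \<notin> W \<Longrightarrow> oless b a"
  unfolding oless_def using Wtotal by blast
lemma oless_not_le: "oless a b \<Longrightarrow> (b,a) \<notin> W"
  unfolding oless_def using Wantisym by blast
lemma trich: "a \<in> Field W \<Longrightarrow> b \<in> Field W \<Longrightarrow> oless a b \<or> a = b \<or> oless b a"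
  unfolding oless_def using Wtotal by blast

lemma Field_ne: "Field W \<noteq> {}" using Field_inf by auto

lemma ozero_in: "ozero \<in> Field W"
  unfolding ozero_def using wo_rel.minim_in[OF wo, of "Field W"] Field_ne by blast
lemma ozero_le: "a \<in> Field W \<Longrightarrow> (ozero,a) \<in> W"
  unfolding ozero_def using wo_rel.minim_least[OF wo, of "Field W"] by blast
lemma not_oless_ozero: "\<not> oless a ozero"
  using ozero_le oless_not_le WF1 unfolding oless_def by blast

lemma AboveS_ne: "a \<in> Field W \<Longrightarrow> AboveS W {a} \<noteq> {}"
  using infinite_Card_order_limit[OF CO Field_inf] unfolding AboveS_def by blast

lemma osucc_in: "a \<in> Field W \<Longrightarrow> osucc a \<in> Field W"
  unfolding osucc_def using wo_rel.suc_inField[OF wo, of "{a}"] AboveS_ne by blast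
lemma osucc_gt: "a \<in> Field W \<Longrightarrow> oless a (osucc a)"
  unfolding osucc_def oless_def using wo_rel.suc_greater[OF wo, of "{a}" a] AboveS_ne by auto
lemma osucc_least: "oless a b \<Longrightarrow> (osucc a, b) \<in> W"
  unfolding osucc_def oless_def using wo_rel.suc_least_AboveS[OF wo, of b "{a}"]
  by (auto simp: AboveS_def intro: WF2)
lemma osucc_inj: "a \<in> Field W \<Longrightarrow> b \<in> Field W \<Longrightarrow> osucc a = osucc b \<Longrightarrow> a = b"
  by (metis osucc_gt osucc_least oless_not_le trich)
lemma osucc_mono_rev: "a \<in> Field W \<Longrightarrow> b \<in> Field W \<Longrightarrow> (osucc a, osucc b) \<in> W \<Longrightarrow> (a,b) \<in> W"
  by (metis osucc_gt osucc_least oless_not_le not_le_oless Wtrans)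
lemma osucc_ne_ozero: "a \<in> Field W \<Longrightarrow> osucc a \<noteq> ozero"
  using osucc_gt not_oless_ozero by metis

lemma osup:
  assumes "A \<subseteq> Field W" "countable A"
  shows "osup A \<in> Field W" "\<And>a. a \<in> A \<Longrightarrow> (a, osup A) \<in> W"
    "\<And>b. b \<in> Field W \<Longrightarrow> (\<forall>a\<in>A. (a,b) \<in> W) \<Longrightarrow> (osup A, b) \<in> W"
proof -
  have ne: "Above W A \<noteq> {}" using bounded[OF assms] unfolding Above_def by blast
  have sub: "Above W A \<subseteq> Field W" unfolding Above_def by blast
  have "osup A \<in> Above W A" unfolding osup_def wo_rel.supr_def[OF wo]
    using wo_rel.minim_in[OF wo sub ne] .
  then show "osup A \<in> Field W" "\<And>a. a \<in> A \<Longrightarrow> (a, osup A) \<in> W"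
    unfolding Above_def by auto
  show "\<And>b. b \<in> Field W \<Longrightarrow> (\<forall>a\<in>A. (a,b) \<in> W) \<Longrightarrow> (osup A, b) \<in> W"
    unfolding osup_def wo_rel.supr_def[OF wo]
    using wo_rel.minim_least[OF wo sub] unfolding Above_def by blast
qed

lemma osup_finite:
  assumes "A \<subseteq> Field W" "finite A" "A \<noteq> {}"
  shows "osup A \<in> A"
proof -
  have "\<exists>m\<in>A. \<forall>a\<in>A. (a,m) \<in> W" using assms(2,3,1)
  proof (induction A rule: finite_ne_induct)
    case (singleton x) then show ?case using Wrefl by auto
  next
    case (insert x F)
    then obtain m where m: "m\<in>F" "\<forall>a\<in>F. (a,m) \<in> W" by auto
    show ?case
    proof (cases "(x,m) \<in> W")
      case True then show ?thesis using m by auto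
    next
      case False
      then have "(m,x) \<in> W" using Wtotal insert m by blast
      then show ?thesis using m Wtrans insert Wrefl by blast
    qed
  qed
  then obtain m where m: "m\<in>A" "\<forall>a\<in>A. (a,m) \<in> W" by blast
  have c: "countable A" using assms(2) by (rule countable_finite)
  have "osup A = m" using osup[OF assms(1) c] m assms(1) Wantisym by blast
  then show ?thesis using m by simp
qed

lemma oadd_0[simp]: "oadd_nat l 0 = l" unfolding oadd_nat_def by simp
lemma oadd_Suc[simp]: "oadd_nat l (Suc m) = osucc (oadd_nat l m)" unfolding oadd_nat_def by simp
lemma oadd_in: "a \<in> Field W \<Longrightarrow> oadd_nat a m \<in> Field W"
  by (induction m) (auto intro: osucc_in)
lemma oadd_le: "a \<in> Field W \<Longrightarrow> (a, oadd_nat a m) \<in> W"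
proof (induction m)
  case 0 then show ?case using Wrefl by simp
next
  case (Suc m) then show ?case using osucc_gt[OF oadd_in[OF Suc.prems]] Wtrans
    unfolding oless_def by auto
qed
lemma oadd_less: "a \<in> Field W \<Longrightarrow> j < j' \<Longrightarrow> oless (oadd_nat a j) (oadd_nat a j')"
proof (induction j')
  case 0 then show ?case by simp
next
  case (Suc j')
  have g: "oless (oadd_nat a j') (oadd_nat a (Suc j'))" using osucc_gt[OF oadd_in[OF Suc.prems(1)]] by simp
  show ?case
  proof (cases "j = j'")
    case True then show ?thesis using g by simp
  next
    case False then show ?thesis using Suc g oless_trans by simp
  qed
qed
lemma oadd_le_iff: "a \<in> Field W \<Longrightarrow> (oadd_nat a j, oadd_nat a j') \<in> W \<longleftrightarrow> j \<le> j'"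
  by (metis Wrefl linorder_not_less oadd_in oadd_less order.order_iff_strict oless_def oless_not_le)

lemma lz_field: "limit_or_zero l \<Longrightarrow> l \<in> Field W" unfolding limit_or_zero_def by simp
lemma lz_ozero: "limit_or_zero ozero"
  unfolding limit_or_zero_def using ozero_in osucc_ne_ozero by blast
lemma limit_below: "limit_or_zero l \<Longrightarrow> oless b l \<Longrightarrow> oless (oadd_nat b j) l"
proof (induction j)
  case 0 then show ?case by simp
next
  case (Suc j)
  then have "(osucc (oadd_nat b j), l) \<in> W" using osucc_least by blast
  moreover have "oadd_nat b j \<in> Field W" using Suc unfolding oless_def by (blast intro: WF1)
  then have "osucc (oadd_nat b j) \<noteq> l" using Suc(2) unfolding limit_or_zero_def by blast
  ultimately show ?case unfolding oless_def by simp
qed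

lemma decomp_unique: "limit_or_zero l \<Longrightarrow> limit_or_zero l' \<Longrightarrow> oadd_nat l m = oadd_nat l' m'
   \<Longrightarrow> l = l' \<and> m = m'"
proof (induction m arbitrary: m')
  case 0
  then show ?case
  proof (cases m')
    case (Suc k) then show ?thesis using 0 oadd_in[OF lz_field[OF 0(2)], of k]
      unfolding limit_or_zero_def by auto
  qed simp
next
  case (Suc m)
  note IH = Suc.IH and P = Suc.prems
  show ?case
  proof (cases m')
    case 0 then show ?thesis using P oadd_in[OF lz_field[OF P(1)], of m]
      unfolding limit_or_zero_def by auto
  next
    case (Suc k)
    have "osucc (oadd_nat l m) = osucc (oadd_nat l' k)" using P(3) Suc by simp
    then have "oadd_nat l m = oadd_nat l' k"
      using osucc_inj oadd_in lz_field P(1,2) by blast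
    then show ?thesis using IH[OF P(1,2)] Suc by blast
  qed
qed

lemma decomp_exists: "a \<in> Field W \<Longrightarrow> \<exists>l m. limit_or_zero l \<and> a = oadd_nat l m"
proof (induction a rule: wf_induct[OF wo_rel.WF[OF wo]])
  case (1 a)
  show ?case
  proof (cases "limit_or_zero a")
    case True then show ?thesis by (metis oadd_0)
  next
    case False
    then obtain b where b: "b \<in> Field W" "osucc b = a" using 1 unfolding limit_or_zero_def by blast
    then have "(b,a) \<in> W - Id" using osucc_gt unfolding oless_def by auto
    then obtain l m where "limit_or_zero l" "b = oadd_nat l m" using 1 b by blast
    then show ?thesis using b by (metis oadd_Suc)
  qed
qed

lemma C1:
  assumes l: "limit_or_zero l" "limit_or_zero l'" and h: "oless (oadd_nat l' m') (oadd_nat l m)"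
  shows "oless (oadd_nat l' (Suc (2*m'))) (oadd_nat l (2*m))"
proof -
  have F: "l \<in> Field W" "l' \<in> Field W" using l lz_field by auto
  consider "l' = l" | "oless l' l" | "oless l l'" using trich F by blast
  then show ?thesis
  proof cases
    case 1
    then have "m' < m" using h oadd_le_iff[OF F(1)] unfolding oless_def
      by (metis linorder_not_less oadd_in oless_def oless_not_le F(1) oadd_less)
    then have "Suc (2*m') < 2*m" by arith
    then show ?thesis using 1 oadd_less[OF F(1), of "Suc (2*m')" "2*m"] by simp
  next
    case 2
    then show ?thesis using limit_below[OF l(1) 2] oadd_le[OF F(1)] oless_le_trans by blast
  next
    case 3
    then have "oless (oadd_nat l m) l'" using limit_below[OF l(2)] by blast
    then have "oless (oadd_nat l m) (oadd_nat l' m')" using oadd_le[OF F(2)] oless_le_trans by blast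
    then show ?thesis using h oless_trans oless_irrefl by blast
  qed
qed

lemma C2:
  assumes l: "limit_or_zero l" "limit_or_zero l'" and h: "(oadd_nat l' m', oadd_nat l m) \<in> W"
  shows "(oadd_nat l' (2*m'), oadd_nat l (2*m)) \<in> W"
proof -
  have F: "l \<in> Field W" "l' \<in> Field W" using l lz_field by auto
  consider "l' = l" | "oless l' l" | "oless l l'" using trich F by blast
  then show ?thesis
  proof cases
    case 1
    then have "m' \<le> m" using h oadd_le_iff[OF F(1)] by simp
    then show ?thesis using 1 oadd_le_iff[OF F(1)] by simp
  next
    case 2
    then show ?thesis using limit_below[OF l(1) 2] oadd_le[OF F(1)] oless_le_trans
      unfolding oless_def by blast
  next
    case 3
    then have "oless (oadd_nat l m) l'" using limit_below[OF l(2)] by blast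
    then have "oless (oadd_nat l m) (oadd_nat l' m')" using oadd_le[OF F(2)] oless_le_trans by blast
    then show ?thesis using h oless_not_le by blast
  qed
qed

lemma odd_not_even: "limit_or_zero l \<Longrightarrow> \<not> oeven (oadd_nat l (Suc (2*m)))"
  unfolding oeven_def using decomp_unique by (metis even_Suc even_mult_iff even_numeral)


lemma WFW: "wf (W - Id)" using wo_rel.WF[OF wo] .

lemma cut_img: "cut g (W - Id) a ` {b. oless b a} = g ` {b. oless b a}"
  by (rule image_cong) (auto simp: cut_apply oless_def)

lemma Fclass_eq: "(Fclass a :: 'a::topological_space set set) = (if a = ozero then {A. closed A}
   else if oeven a then {\<Inter>(range f) | f :: nat \<Rightarrow> 'a set. \<forall>k. f k \<in> \<Union>(Fclass ` {b. oless b a})}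
   else {\<Union>(range f) | f :: nat \<Rightarrow> 'a set. \<forall>k. f k \<in> \<Union>(Fclass ` {b. oless b a})})"
  unfolding Fclass_def
  apply (subst wfrec[OF WFW])
  apply (simp only: cut_img)
  done

lemma F0: "Fclass ozero = {A. closed A}" by (subst Fclass_eq) simp

lemma Fclass_even: "a \<noteq> ozero \<Longrightarrow> oeven a \<Longrightarrow> (Fclass a :: 'a::topological_space set set) =
   {\<Inter>(range f) | f :: nat \<Rightarrow> 'a set. \<forall>k. f k \<in> \<Union>(Fclass ` {b. oless b a})}"
  by (subst Fclass_eq) (simp only: if_False if_True)
lemma Fclass_odd: "a \<noteq> ozero \<Longrightarrow> \<not> oeven a \<Longrightarrow> (Fclass a :: 'a::topological_space set set) =
   {\<Union>(range f) | f :: nat \<Rightarrow> 'a set. \<forall>k. f k \<in> \<Union>(Fclass ` {b. oless b a})}"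
  by (subst Fclass_eq) (simp only: if_False if_True)

lemma F_even_intro: fixes f :: "nat \<Rightarrow> _" assumes "a \<noteq> ozero" "oeven a" "\<forall>k. \<exists>b. oless b a \<and> f k \<in> Fclass b"
  shows "\<Inter>(range f) \<in> Fclass a"
proof -
  have h: "\<forall>k. f k \<in> \<Union>(Fclass ` {b. oless b a})" using assms(3) by (simp add: UN_iff)
  show ?thesis unfolding Fclass_even[OF assms(1,2)] mem_Collect_eq by (rule exI[where x=f]) (rule conjI[OF refl h])
qed
lemma F_odd_intro: fixes f :: "nat \<Rightarrow> _" assumes "a \<noteq> ozero" "\<not> oeven a" "\<forall>k. \<exists>b. oless b a \<and> f k \<in> Fclass b"
  shows "\<Union>(range f) \<in> Fclass a"
proof -
  have h: "\<forall>k. f k \<in> \<Union>(Fclass ` {b. oless b a})" using assms(3) by (simp add: UN_iff)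
  show ?thesis unfolding Fclass_odd[OF assms(1,2)] mem_Collect_eq by (rule exI[where x=f]) (rule conjI[OF refl h])
qed
lemma F_even_elim: assumes "a \<noteq> ozero" "oeven a" "A \<in> Fclass a"
  shows "\<exists>f::nat \<Rightarrow> _. A = \<Inter>(range f) \<and> (\<forall>k. \<exists>b. oless b a \<and> f k \<in> Fclass b)"
proof -
  have "\<exists>f::nat \<Rightarrow> _. A = \<Inter>(range f) \<and> (\<forall>k. f k \<in> \<Union>(Fclass ` {b. oless b a}))"
    using assms(3) unfolding Fclass_even[OF assms(1,2)] mem_Collect_eq .
  then obtain f :: "nat \<Rightarrow> _" where f: "A = \<Inter>(range f)" "\<forall>k. f k \<in> \<Union>(Fclass ` {b. oless b a})" by (elim exE conjE)
  have g: "\<forall>k. \<exists>b. oless b a \<and> f k \<in> Fclass b" using f(2) by (simp add: UN_iff)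
  show ?thesis by (rule exI[where x=f]) (rule conjI[OF f(1) g])
qed
lemma F_odd_elim: assumes "a \<noteq> ozero" "\<not> oeven a" "A \<in> Fclass a"
  shows "\<exists>f::nat \<Rightarrow> _. A = \<Union>(range f) \<and> (\<forall>k. \<exists>b. oless b a \<and> f k \<in> Fclass b)"
proof -
  have "\<exists>f::nat \<Rightarrow> _. A = \<Union>(range f) \<and> (\<forall>k. f k \<in> \<Union>(Fclass ` {b. oless b a}))"
    using assms(3) unfolding Fclass_odd[OF assms(1,2)] mem_Collect_eq .
  then obtain f :: "nat \<Rightarrow> _" where f: "A = \<Union>(range f)" "\<forall>k. f k \<in> \<Union>(Fclass ` {b. oless b a})" by (elim exE conjE)
  have g: "\<forall>k. \<exists>b. oless b a \<and> f k \<in> Fclass b" using f(2) by (simp add: UN_iff)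
  show ?thesis by (rule exI[where x=f]) (rule conjI[OF f(1) g])
qed

lemma Fmono: "oless b a \<Longrightarrow> Fclass b \<subseteq> Fclass a"
proof
  fix A assume h: "oless b a" "A \<in> Fclass b"
  have a: "a \<noteq> ozero"
  proof
    assume "a = ozero" then show False using h(1) not_oless_ozero by simp
  qed
  have k: "\<forall>k. \<exists>c. oless c a \<and> (\<lambda>_. A) k \<in> Fclass c" using h by blast
  show "A \<in> Fclass a"
  proof (cases "oeven a")
    case True
    show ?thesis using F_even_intro[OF a True k] by simp
  next
    case False
    show ?thesis using F_odd_intro[OF a False k] by simp
  qed
qed

lemma Fmono_le: "Fclass b \<subseteq> Fclass a" if "(b,a) \<in> W"
proof (cases "b = a")
  case True
  then show ?thesis by (simp only: order_refl)
next
  case False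
  then show ?thesis using Fmono that unfolding oless_def by blast
qed

lemma closed_F: "closed A \<Longrightarrow> a \<in> Field W \<Longrightarrow> A \<in> Fclass a"
  using Fmono_le[OF ozero_le] F0 by blast

lemma Fint_even: "oeven a \<or> a = ozero \<Longrightarrow> A \<in> Fclass a \<Longrightarrow> B \<in> Fclass a \<Longrightarrow> A \<inter> B \<in> Fclass a"
proof (cases "a = ozero")
  case True
  then show "A \<in> Fclass a \<Longrightarrow> B \<in> Fclass a \<Longrightarrow> A \<inter> B \<in> Fclass a"
    unfolding True F0 using closed_Int by blast
next
  case False
  assume "oeven a \<or> a = ozero" "A \<in> Fclass a" "B \<in> Fclass a"
  then have e: "oeven a" using False by blast
  obtain f :: "nat \<Rightarrow> _" where f: "A = \<Inter>(range f)" "\<forall>k. \<exists>b. oless b a \<and> f k \<in> Fclass b"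
    using F_even_elim[OF False e \<open>A \<in> Fclass a\<close>] by blast
  obtain g :: "nat \<Rightarrow> _" where g: "B = \<Inter>(range g)" "\<forall>k. \<exists>b. oless b a \<and> g k \<in> Fclass b"
    using F_even_elim[OF False e \<open>B \<in> Fclass a\<close>] by blast
  define h where "h (k::nat) = (if even k then f (k div 2) else g (k div 2))" for k
  have "A \<inter> B = \<Inter>(range h)"
  proof -
    have "\<Inter>(range h) = \<Inter>(range f) \<inter> \<Inter>(range g)"
    proof (rule set_eqI, rule iffI)
      fix x assume x: "x \<in> \<Inter>(range h)"
      have "x \<in> f i" for i using x[unfolded INT_iff, rule_format, of "2*i"] by (simp add: h_def)
      moreover have "x \<in> g i" for i using x[unfolded INT_iff, rule_format, of "2*i+1"] by (simp add: h_def)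
      ultimately show "x \<in> \<Inter>(range f) \<inter> \<Inter>(range g)" by auto
    qed (auto simp: h_def)
    then show ?thesis using f g by simp
  qed
  moreover have "\<forall>k. \<exists>b. oless b a \<and> h k \<in> Fclass b" using f(2) g(2) by (simp add: h_def)
  ultimately show ?thesis using F_even_intro[OF False e] by simp
qed

lemma Fint_odd:
  assumes b: "b \<in> Field W" "oeven b \<or> b = ozero" and n: "\<not> oeven (osucc b)"
    and A: "A \<in> Fclass (osucc b)" and B: "B \<in> Fclass (osucc b)"
  shows "A \<inter> B \<in> Fclass (osucc b)"
proof -
  have nz: "osucc b \<noteq> ozero" using osucc_ne_ozero b by blast
  have low: "X \<in> Fclass b" if "oless c (osucc b)" "X \<in> Fclass c" for c X
  proof -
    have "(c,b) \<in> W"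
    proof (rule ccontr)
      assume "(c,b) \<notin> W"
      then have "oless b c" using not_le_oless b(1) that(1) unfolding oless_def by (blast intro: WF1)
      then show False using osucc_least that(1) oless_not_le by blast
    qed
    then show ?thesis using Fmono_le that by blast
  qed
  obtain f :: "nat \<Rightarrow> _" where f: "A = \<Union>(range f)" "\<forall>k. \<exists>c. oless c (osucc b) \<and> f k \<in> Fclass c"
    using F_odd_elim[OF nz n A] by blast
  obtain g :: "nat \<Rightarrow> _" where g: "B = \<Union>(range g)" "\<forall>k. \<exists>c. oless c (osucc b) \<and> g k \<in> Fclass c"
    using F_odd_elim[OF nz n B] by blast
  define h where "h (k::nat) = f (fst (prod_decode k)) \<inter> g (snd (prod_decode k))" for k
  have "A \<inter> B = \<Union>(range h)"
  proof -
    have "\<Union>(range h) = \<Union>(range f) \<inter> \<Union>(range g)"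
    proof (rule set_eqI, rule iffI)
      fix x assume "x \<in> \<Union>(range f) \<inter> \<Union>(range g)"
      then obtain i j where "x \<in> f i" "x \<in> g j" by auto
      then have "x \<in> h (prod_encode (i,j))" by (simp add: h_def)
      then show "x \<in> \<Union>(range h)" by blast
    qed (auto simp: h_def)
    then show ?thesis using f g by simp
  qed
  moreover have "\<forall>k. \<exists>c. oless c (osucc b) \<and> h k \<in> Fclass c"
  proof
    fix k
    obtain c1 where c1: "oless c1 (osucc b)" "f (fst (prod_decode k)) \<in> Fclass c1" using f(2) by blast
    obtain c2 where c2: "oless c2 (osucc b)" "g (snd (prod_decode k)) \<in> Fclass c2" using g(2) by blast
    have "h k \<in> Fclass b" unfolding h_def
      using Fint_even[OF b(2) low[OF c1] low[OF c2]] .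
    then show "\<exists>c. oless c (osucc b) \<and> h k \<in> Fclass c" using osucc_gt[OF b(1)] by blast
  qed
  ultimately show ?thesis using F_odd_intro[OF nz n] by simp
qed


lemma extends_app: "extends (s @ u) s" unfolding extends_def by blast

lemma tree_prefix: "is_tree T \<Longrightarrow> s @ u \<in> T \<Longrightarrow> s \<in> T"
  unfolding is_tree_def using extends_app by blast

lemma wf_child:
  assumes tree: "is_tree T" and wft: "well_founded_tree T"
  shows "wf (child_rel T)"
proof (rule ccontr)
  assume "\<not> wf (child_rel T)"
  then obtain f where f: "\<forall>i. (f (Suc i), f i) \<in> child_rel T"
    using wf_iff_no_infinite_down_chain by blast
  have step: "\<exists>n. f (Suc i) = f i @ [n]" and inT: "f (Suc i) \<in> T" for i
    using f[rule_format, of i] unfolding child_rel_def by auto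
  have ext: "\<exists>w. f (i + d) = f i @ w" for i d
  proof (induction d)
    case 0 then show ?case by simp
  next
    case (Suc d)
    then obtain w where "f (i + d) = f i @ w" by blast
    moreover obtain n where "f (Suc (i + d)) = f (i + d) @ [n]" using step by blast
    ultimately show ?case by simp
  qed
  have len: "length (f i) = length (f 0) + i" for i
  proof (induction i)
    case (Suc i)
    obtain n where "f (Suc i) = f i @ [n]" using step by blast
    then show ?case using Suc by simp
  qed simp
  define x where "x j = f (Suc j) ! j" for j
  have "map x [0..<k] \<in> T" for k
  proof -
    have "map x [0..<k] = take k (f (Suc k))"
    proof (rule nth_equalityI)
      show "length (map x [0..<k]) = length (take k (f (Suc k)))" using len[of "Suc k"] by simp
    next
      fix j assume "j < length (map x [0..<k])"
      then have j: "j < k" by simp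
      obtain w where w: "f (Suc j + (k - j)) = f (Suc j) @ w" using ext by blast
      have "Suc j + (k - j) = Suc k" using j by simp
      then have "f (Suc k) = f (Suc j) @ w" using w by simp
      moreover have "j < length (f (Suc j))" using len[of "Suc j"] by simp
      ultimately have "f (Suc k) ! j = f (Suc j) ! j" by (simp add: nth_append)
      then show "map x [0..<k] ! j = take k (f (Suc k)) ! j" using j by (simp add: x_def)
    qed
    moreover have "take k (f (Suc k)) @ drop k (f (Suc k)) \<in> T" using inT by simp
    ultimately show ?thesis using tree_prefix[OF tree] by metis
  qed
  then show False using wft unfolding well_founded_tree_def by blast
qed

lemma node_rank_eq: "wf (child_rel T) \<Longrightarrow>
  node_rank T t = osup ((\<lambda>s. osucc (node_rank T s)) ` ims T t)"
proof -
  assume w: "wf (child_rel T)"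
  have "node_rank T t = osup ((\<lambda>s. osucc (cut (node_rank T) (child_rel T) t s)) ` ims T t)"
    unfolding node_rank_def by (subst wfrec[OF w]) simp
  also have "(\<lambda>s. osucc (cut (node_rank T) (child_rel T) t s)) ` ims T t
       = (\<lambda>s. osucc (node_rank T s)) ` ims T t"
    by (rule image_cong) (auto simp: ims_def child_rel_def cut_apply)
  finally show ?thesis .
qed

lemma ims_countable: "countable (ims T t)"
proof -
  have "ims T t = (\<lambda>n. t @ [n]) ` {n. t @ [n] \<in> T}" unfolding ims_def by blast
  then show ?thesis by simp
qed

lemma node_rank_in: assumes w: "wf (child_rel T)" shows "node_rank T t \<in> Field W"
proof (induction t rule: wf_induct[OF w])
  case (1 t)
  have ch: "(s, t) \<in> child_rel T" if "s \<in> ims T t" for s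
    using that unfolding ims_def child_rel_def by blast
  have sub: "(\<lambda>s. osucc (node_rank T s)) ` ims T t \<subseteq> Field W"
  proof
    fix y assume "y \<in> (\<lambda>s. osucc (node_rank T s)) ` ims T t"
    then obtain s where s: "s \<in> ims T t" "y = osucc (node_rank T s)" by (rule imageE)
    have "node_rank T s \<in> Field W" using 1 ch[OF s(1)] by blast
    then show "y \<in> Field W" using s(2) osucc_in by simp
  qed
  have "countable ((\<lambda>s. osucc (node_rank T s)) ` ims T t)" using ims_countable by simp
  then show ?case by (subst node_rank_eq[OF w, of t]) (rule osup(1)[OF sub])
qed

lemma child_rank: assumes w: "wf (child_rel T)" and c: "t @ [k] \<in> T"
  shows "(osucc (node_rank T (t @ [k])), node_rank T t) \<in> W"
proof -
  have sub: "(\<lambda>s. osucc (node_rank T s)) ` ims T t \<subseteq> Field W"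
  proof
    fix y assume "y \<in> (\<lambda>s. osucc (node_rank T s)) ` ims T t"
    then obtain s where s: "s \<in> ims T t" "y = osucc (node_rank T s)" by (rule imageE)
    then show "y \<in> Field W" using node_rank_in[OF w] osucc_in by simp
  qed
  have "countable ((\<lambda>s. osucc (node_rank T s)) ` ims T t)" using ims_countable by simp
  moreover have "t @ [k] \<in> ims T t" using c unfolding ims_def by blast
  ultimately show ?thesis by (subst node_rank_eq[OF w, of t]) (rule osup(2)[OF sub], auto)
qed

lemma child_rank_less: "wf (child_rel T) \<Longrightarrow> t @ [k] \<in> T \<Longrightarrow> oless (node_rank T (t @ [k])) (node_rank T t)"
  by (rule oless_le_trans[OF osucc_gt[OF node_rank_in] child_rank])

lemma extends_nil: "extends t []" unfolding extends_def by simp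

lemma R_decomp:
  assumes tree: "is_tree S"
  shows "R_op S C = C [] \<inter> (\<Inter>k\<in>{k. [k] \<in> S}. \<Union>s\<in>{s::nat list. length s = k}.
            R_op (subtree S [k]) (\<lambda>u. C (s @ u)))"
proof (rule set_eqI, rule iffI)
  fix x assume "x \<in> R_op S C"
  then obtain \<phi> where x0: "x \<in> C []" and adm: "admissible S \<phi>" and xs: "\<forall>t\<in>S. x \<in> C (\<phi> t)"
    unfolding R_op_def by blast
  have mono: "\<And>s t. s \<in> S \<Longrightarrow> t \<in> S \<Longrightarrow> extends t s \<Longrightarrow> extends (\<phi> t) (\<phi> s)"
    and lenp: "\<And>t. t \<in> S \<Longrightarrow> length (\<phi> t) = sum_list t"
    using adm unfolding admissible_def by blast+
  have "x \<in> (\<Union>s\<in>{s::nat list. length s = k}. R_op (subtree S [k]) (\<lambda>u. C (s @ u)))"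
    if k: "[k] \<in> S" for k
  proof -
    define s where "s = \<phi> [k]"
    have ls: "length s = k" using lenp[OF k] by (simp add: s_def)
    define \<psi> where "\<psi> u = drop k (\<phi> (k # u))" for u
    have dec: "\<phi> (k # u) = s @ \<psi> u" if "k # u \<in> S" for u
    proof -
      have "extends (k # u) [k]" unfolding extends_def by simp
      then have "extends (\<phi> (k # u)) s" using mono[OF k that] by (simp add: s_def)
      then obtain w where "\<phi> (k # u) = s @ w" unfolding extends_def by blast
      then show ?thesis using ls by (simp add: \<psi>_def)
    qed
    have sub: "u \<in> subtree S [k] \<longleftrightarrow> k # u \<in> S" for u unfolding subtree_def by simp
    have "admissible (subtree S [k]) \<psi>"
      unfolding admissible_def
    proof (intro conjI ballI impI)
      fix u v assume u: "u \<in> subtree S [k]" and v: "v \<in> subtree S [k]" and e: "extends v u"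
      have "extends (k # v) (k # u)" using e unfolding extends_def by simp
      then have "extends (\<phi> (k # v)) (\<phi> (k # u))" using mono u v sub by blast
      then show "extends (\<psi> v) (\<psi> u)" using dec u v sub unfolding extends_def by force
    next
      fix u assume u: "u \<in> subtree S [k]"
      have "length (\<phi> (k # u)) = k + sum_list u" using lenp u sub by simp
      then show "length (\<psi> u) = sum_list u" using dec u sub ls by force
    qed
    moreover have "x \<in> C (s @ [])" using xs k by (simp add: s_def)
    moreover have "\<forall>u\<in>subtree S [k]. x \<in> C (s @ \<psi> u)" using xs dec sub by metis
    ultimately have "x \<in> R_op (subtree S [k]) (\<lambda>u. C (s @ u))" unfolding R_op_def by blast
    then show ?thesis using ls by blast
  qed
  then show "x \<in> C [] \<inter> (\<Inter>k\<in>{k. [k] \<in> S}. \<Union>s\<in>{s::nat list. length s = k}.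
            R_op (subtree S [k]) (\<lambda>u. C (s @ u)))" using x0 by blast
next
  fix x assume "x \<in> C [] \<inter> (\<Inter>k\<in>{k. [k] \<in> S}. \<Union>s\<in>{s::nat list. length s = k}.
            R_op (subtree S [k]) (\<lambda>u. C (s @ u)))"
  then have x0: "x \<in> C []" and
    h: "\<forall>k\<in>{k. [k] \<in> S}. \<exists>p. length (fst p) = k \<and> admissible (subtree S [k]) (snd p) \<and>
          (\<forall>u\<in>subtree S [k]. x \<in> C (fst p @ snd p u))"
    unfolding R_op_def by (auto simp: Bex_def) metis
  obtain P where P: "\<forall>k\<in>{k. [k] \<in> S}. length (fst (P k)) = k \<and> admissible (subtree S [k]) (snd (P k)) \<and>
          (\<forall>u\<in>subtree S [k]. x \<in> C (fst (P k) @ snd (P k) u))"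
    using bchoice[OF h] by blast
  define \<phi> where "\<phi> t = (case t of [] \<Rightarrow> [] | k # u \<Rightarrow> fst (P k) @ snd (P k) u)" for t
  have sub: "u \<in> subtree S [k] \<longleftrightarrow> k # u \<in> S" for u k unfolding subtree_def by simp
  have kin: "[k] \<in> S" if "k # u \<in> S" for k u using tree_prefix[OF tree, of "[k]" u] that by simp
  have "admissible S \<phi>" unfolding admissible_def
  proof (intro conjI ballI impI)
    fix s t assume s: "s \<in> S" and t: "t \<in> S" and e: "extends t s"
    show "extends (\<phi> t) (\<phi> s)"
    proof (cases s)
      case Nil then show ?thesis by (simp add: \<phi>_def extends_nil)
    next
      case (Cons k u)
      obtain w where tw: "t = s @ w" using e unfolding extends_def by blast
      have k: "[k] \<in> S" using kin s Cons by blast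
      have a: "admissible (subtree S [k]) (snd (P k))" using P k by blast
      have "u \<in> subtree S [k]" "u @ w \<in> subtree S [k]" using s t tw Cons sub by auto
      moreover have "extends (u @ w) u" by (rule extends_app)
      ultimately have "extends (snd (P k) (u @ w)) (snd (P k) u)" using a unfolding admissible_def by blast
      then show ?thesis using tw Cons unfolding extends_def \<phi>_def by auto
    qed
  next
    fix t assume t: "t \<in> S"
    show "length (\<phi> t) = sum_list t"
    proof (cases t)
      case Nil then show ?thesis by (simp add: \<phi>_def)
    next
      case (Cons k u)
      have k: "[k] \<in> S" using kin t Cons by blast
      have a: "admissible (subtree S [k]) (snd (P k))" and l: "length (fst (P k)) = k" using P k by blast+
      have "u \<in> subtree S [k]" using t Cons sub by auto
      then have "length (snd (P k) u) = sum_list u" using a unfolding admissible_def by blast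
      then show ?thesis using Cons l by (simp add: \<phi>_def)
    qed
  qed
  moreover have "\<forall>t\<in>S. x \<in> C (\<phi> t)"
  proof
    fix t assume t: "t \<in> S"
    show "x \<in> C (\<phi> t)"
    proof (cases t)
      case Nil then show ?thesis using x0 by (simp add: \<phi>_def)
    next
      case (Cons k u)
      have k: "[k] \<in> S" using kin t Cons by blast
      have "u \<in> subtree S [k]" using t Cons sub by auto
      then show ?thesis using P k Cons by (simp add: \<phi>_def)
    qed
  qed
  ultimately show "x \<in> R_op S C" unfolding R_op_def using x0 by blast
qed

lemma F_odd_UN:
  fixes X :: "'i \<Rightarrow> 'a::topological_space set"
  assumes a: "a \<noteq> ozero" "\<not> oeven a" and I: "countable I" "I \<noteq> {}"
    and h: "\<forall>i\<in>I. \<exists>b. oless b a \<and> X i \<in> Fclass b"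
  shows "(\<Union>i\<in>I. X i) \<in> Fclass a"
proof -
  define f where "f n = X (from_nat_into I n)" for n
  have "range f = X ` range (from_nat_into I)" unfolding f_def by auto
  then have r: "range f = X ` I" using range_from_nat_into[OF I(2,1)] by simp
  have "\<forall>n. \<exists>b. oless b a \<and> f n \<in> Fclass b" unfolding f_def using from_nat_into[OF I(2)] h by blast
  then have "\<Union>(range f) \<in> Fclass a" by (rule F_odd_intro[OF a])
  then show ?thesis using r by simp
qed

lemma lists_countable: "countable {s::nat list. length s = k}"
  by (rule countable_subset[OF subset_UNIV]) simp

lemma lists_ne: "{s::nat list. length s = k} \<noteq> {}"
proof -
  have "replicate k 0 \<in> {s::nat list. length s = k}" by simp
  then show ?thesis by blast
qed

lemma subtree_tree: "is_tree T \<Longrightarrow> is_tree (subtree T t)"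
  unfolding is_tree_def subtree_def extends_def by (metis append.assoc mem_Collect_eq)

lemma subtree_sub: "subtree (subtree T t) [k] = subtree T (t @ [k])"
  unfolding subtree_def by simp

lemma level_odd:
  assumes lk: "limit_or_zero lk"
    and IHk: "\<forall>s. X s \<in> Fclass (oadd_nat lk (2*nk))"
  shows "(\<Union>s\<in>{s::nat list. length s = k}. X s) \<in> Fclass (oadd_nat lk (Suc (2*nk)))"
proof -
  have F: "oadd_nat lk (2*nk) \<in> Field W" using oadd_in lz_field lk by blast
  have nz: "oadd_nat lk (Suc (2*nk)) \<noteq> ozero" using osucc_ne_ozero[OF F] by simp
  have ne: "\<not> oeven (oadd_nat lk (Suc (2*nk)))" using odd_not_even[OF lk] .
  have lt: "oless (oadd_nat lk (2*nk)) (oadd_nat lk (Suc (2*nk)))" using osucc_gt[OF F] by simp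
  show ?thesis using F_odd_UN[OF nz ne lists_countable lists_ne] IHk lt by blast
qed

lemma main_i:
  assumes tree: "is_tree T" and w: "wf (child_rel T)"
  shows "\<forall>(C::nat list \<Rightarrow> 'a::topological_space set) l n. t \<in> T \<longrightarrow> (\<forall>s. closed (C s)) \<longrightarrow>
     limit_or_zero l \<longrightarrow> node_rank T t = oadd_nat l n \<longrightarrow>
     R_op (subtree T t) C \<in> Fclass (oadd_nat l (2*n))"
proof (induction t rule: wf_induct[OF w])
  case (1 t)
  show ?case
  proof (intro allI impI)
    fix C :: "nat list \<Rightarrow> 'a set" and l n
    assume tT: "t \<in> T" and cl: "\<forall>s. closed (C s)" and lz: "limit_or_zero l"
      and rk: "node_rank T t = oadd_nat l n"
    define K where "K = {k. [k] \<in> subtree T t}"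
    have Kc: "k \<in> K \<longleftrightarrow> t @ [k] \<in> T" for k unfolding K_def subtree_def by simp
    define V where "V k = (\<Union>s\<in>{s::nat list. length s = k}. R_op (subtree T (t @ [k])) (\<lambda>u. C (s @ u)))" for k
    have dec: "R_op (subtree T t) C = C [] \<inter> (\<Inter>k\<in>K. V k)"
      by (subst R_decomp[OF subtree_tree[OF tree]]) (simp only: K_def subtree_sub V_def[abs_def])
    define a where "a = oadd_nat l (2*n)"
    have aF: "a \<in> Field W" unfolding a_def using oadd_in lz_field lz by blast
    have VK: "\<exists>b. oless b a \<and> V k \<in> Fclass b" if k: "k \<in> K" for k
    proof -
      have c: "t @ [k] \<in> T" using k Kc by blast
      obtain lk nk where lk: "limit_or_zero lk" and bk: "node_rank T (t @ [k]) = oadd_nat lk nk"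
        using decomp_exists[OF node_rank_in[OF w]] by blast
      have ch: "(t @ [k], t) \<in> child_rel T" using c unfolding child_rel_def by blast
      have cl': "\<forall>s'. closed ((\<lambda>u. C (s @ u)) s')" for s using cl by simp
      have IH': "\<forall>(C'::nat list \<Rightarrow> 'a set) l' n'. t @ [k] \<in> T \<longrightarrow> (\<forall>s. closed (C' s)) \<longrightarrow>
         limit_or_zero l' \<longrightarrow> node_rank T (t @ [k]) = oadd_nat l' n' \<longrightarrow>
         R_op (subtree T (t @ [k])) C' \<in> Fclass (oadd_nat l' (2*n'))"
        using 1 ch by blast
      have IHk: "\<forall>s. R_op (subtree T (t @ [k])) (\<lambda>u. C (s @ u)) \<in> Fclass (oadd_nat lk (2*nk))"
      proof
        fix s
        show "R_op (subtree T (t @ [k])) (\<lambda>u. C (s @ u)) \<in> Fclass (oadd_nat lk (2*nk))"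
          using spec[OF spec[OF spec[OF IH', of "\<lambda>u. C (s @ u)"], of lk], of nk] c cl' lk bk by blast
      qed
      have "oless (oadd_nat lk nk) (oadd_nat l n)" using child_rank_less[OF w c] bk rk by simp
      then have lt: "oless (oadd_nat lk (Suc (2*nk))) a" unfolding a_def by (rule C1[OF lz lk])
      have "V k \<in> Fclass (oadd_nat lk (Suc (2*nk)))" unfolding V_def by (rule level_odd[OF lk IHk])
      then show ?thesis using lt by blast
    qed
    show "R_op (subtree T t) C \<in> Fclass (oadd_nat l (2*n))"
    proof (cases "a = ozero")
      case True
      have "l = ozero \<and> 2*n = 0" using decomp_unique[OF lz lz_ozero, of "2*n" 0] True unfolding a_def by simp
      then have n0: "n = 0" and l0: "l = ozero" by auto
      have K0: "K = {}"
      proof (rule ccontr)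
        assume "K \<noteq> {}"
        then obtain k where k: "k \<in> K" by blast
        then have "oless (node_rank T (t @ [k])) (node_rank T t)" using child_rank_less[OF w] Kc by blast
        then show False using rk n0 l0 not_oless_ozero by simp
      qed
      have R0: "R_op (subtree T t) C = C []" using dec K0 by simp
      have cz: "C [] \<in> Fclass ozero" unfolding F0 using cl by simp
      have az: "oadd_nat l (2*n) = ozero" using True unfolding a_def .
      show ?thesis unfolding R0 az by (rule cz)
    next
      case False
      have ev: "oeven a" unfolding oeven_def a_def
        by (rule exI[of _ l], rule exI[of _ "2*n"]) (simp add: lz)
      define f where "f i = (case i of 0 \<Rightarrow> C [] | Suc k \<Rightarrow> if k \<in> K then V k else C [])" for i
      have "\<Inter>(range f) = C [] \<inter> (\<Inter>k\<in>K. V k)"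
      proof (rule set_eqI, rule iffI)
        fix x assume x: "x \<in> \<Inter>(range f)"
        have "x \<in> f 0" using x by blast
        moreover have "x \<in> V k" if "k \<in> K" for k using x[unfolded INT_iff, rule_format, of "Suc k"] that
          by (simp add: f_def)
        ultimately show "x \<in> C [] \<inter> (\<Inter>k\<in>K. V k)" by (simp add: f_def)
      next
        fix x assume x: "x \<in> C [] \<inter> (\<Inter>k\<in>K. V k)"
        show "x \<in> \<Inter>(range f)"
        proof (rule INT_I)
          fix i show "x \<in> f i" using x by (cases i) (auto simp: f_def)
        qed
      qed
      moreover have "\<forall>i. \<exists>b. oless b a \<and> f i \<in> Fclass b"
      proof
        fix i
        have z: "oless ozero a" using False ozero_le[OF aF] unfolding oless_def by simp
        have cz: "C [] \<in> Fclass ozero" unfolding F0 using cl by simp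
        show "\<exists>b. oless b a \<and> f i \<in> Fclass b"
        proof (cases i)
          case 0 then show ?thesis by (intro exI[of _ ozero]) (simp add: f_def z cz)
        next
          case (Suc k)
          show ?thesis
          proof (cases "k \<in> K")
            case True then show ?thesis using VK[OF True] by (simp add: f_def Suc)
          next
            case False then show ?thesis by (intro exI[of _ ozero]) (simp add: f_def Suc z cz)
          qed
        qed
      qed
      then have "\<Inter>(range f) \<in> Fclass a" by (rule F_even_intro[OF False ev])
      ultimately have "C [] \<inter> (\<Inter>k\<in>K. V k) \<in> Fclass a" by simp
      then show ?thesis unfolding dec a_def .
    qed
  qed
qed

lemma fin_int:
  assumes "finite K" "P B" "\<forall>k\<in>K. P (V k)" "\<forall>X Y. P X \<longrightarrow> P Y \<longrightarrow> P (X \<inter> Y)"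
  shows "P (B \<inter> (\<Inter>k\<in>K. V k))"
  using assms
proof (induction K rule: finite_induct)
  case empty then show ?case by simp
next
  case (insert x F)
  have "B \<inter> (\<Inter>k\<in>insert x F. V k) = (B \<inter> (\<Inter>k\<in>F. V k)) \<inter> V x" by blast
  then show ?case using insert by simp
qed

theorem lemma6p5:
  fixes C :: "nat list \<Rightarrow> 'a::topological_space set"
    and T :: "nat list set" and l :: ord1 and n :: nat
  assumes "suslin_scheme C"
    and "\<forall>s. closed (C s)"
    and "is_tree T" and "T \<noteq> {}" and "well_founded_tree T"
    and "limit_or_zero l"
    and "leaf_rank T = oadd_nat l n"
  shows "R_op T C \<in> Fclass (oadd_nat l (2 * n)) \<and>
         (T \<noteq> {[]} \<and> finite (ims T []) \<longrightarrow>
           n \<ge> 1 \<and> R_op T C \<in> Fclass (oadd_nat l (2 * n - 1)))"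
proof -
  have cl: "\<forall>s. closed (C s)" and tree: "is_tree T" and lz: "limit_or_zero l" using assms by auto
  have w: "wf (child_rel T)" using wf_child[OF tree assms(5)] .
  obtain t0 where "t0 \<in> T" using assms(4) by blast
  then have e: "[] \<in> T" using tree_prefix[OF tree, of "[]" t0] by simp
  have sT: "subtree T [] = T" by (simp add: subtree_def)
  have rk: "node_rank T [] = oadd_nat l n" using assms(7) unfolding leaf_rank_def .
  have P1: "R_op T C \<in> Fclass (oadd_nat l (2 * n))"
    using main_i[OF tree w, of "[]"] e cl lz rk sT by metis
  have P2: "n \<ge> 1 \<and> R_op T C \<in> Fclass (oadd_nat l (2 * n - 1))"
    if ne: "T \<noteq> {[]}" and fin: "finite (ims T [])"
  proof -
    define K where "K = {k. [k] \<in> T}"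
    have imsK: "ims T [] = (\<lambda>k. [k]) ` K" unfolding ims_def K_def by auto
    have finK: "finite K" using fin unfolding imsK by (rule finite_imageD) (simp add: inj_on_def)
    have neK: "K \<noteq> {}"
    proof -
      obtain t where t: "t \<in> T" "t \<noteq> []" using ne e by blast
      then obtain k u where "t = k # u" by (cases t) auto
      then have "[k] \<in> T" using tree_prefix[OF tree, of "[k]" u] t by simp
      then show ?thesis unfolding K_def by blast
    qed
    define A where "A = (\<lambda>s. osucc (node_rank T s)) ` ims T []"
    have AF: "A \<subseteq> Field W"
    proof
      fix y assume "y \<in> A"
      then obtain s where "y = osucc (node_rank T s)" unfolding A_def by blast
      then show "y \<in> Field W" using osucc_in node_rank_in[OF w] by simp
    qed
    have finA: "finite A" unfolding A_def using fin by simp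
    have neA: "A \<noteq> {}" unfolding A_def imsK using neK by simp
    have "osup A \<in> A" by (rule osup_finite[OF AF finA neA])
    then obtain k0 where k0: "k0 \<in> K" and r0: "node_rank T [] = osucc (node_rank T [k0])"
      using node_rank_eq[OF w, of "[]"] unfolding A_def imsK by auto
    define b0 where "b0 = node_rank T [k0]"
    have b0F: "b0 \<in> Field W" unfolding b0_def by (rule node_rank_in[OF w])
    have "n \<noteq> 0"
    proof
      assume "n = 0"
      then have "l = osucc b0" using rk r0 unfolding b0_def by simp
      then show False using lz b0F unfolding limit_or_zero_def by blast
    qed
    then obtain n' where n': "n = Suc n'" by (cases n) auto
    have "osucc (oadd_nat l n') = osucc b0" using rk r0 n' unfolding b0_def by simp
    then have "oadd_nat l n' = b0" by (rule osucc_inj[OF oadd_in[OF lz_field[OF lz]] b0F])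
    then have b0e: "b0 = oadd_nat l n'" by simp
    define b where "b = oadd_nat l (2*n')"
    have bF: "b \<in> Field W" unfolding b_def using oadd_in lz_field lz by blast
    have beven: "oeven b" unfolding oeven_def b_def
      by (rule exI[of _ l], rule exI[of _ "2*n'"]) (simp add: lz)
    have bodd: "\<not> oeven (osucc b)" using odd_not_even[OF lz, of n'] unfolding b_def by simp
    define V where "V k = (\<Union>s\<in>{s::nat list. length s = k}. R_op (subtree T [k]) (\<lambda>u. C (s @ u)))" for k
    have dec: "R_op T C = C [] \<inter> (\<Inter>k\<in>K. V k)"
      by (subst R_decomp[OF tree]) (simp only: K_def V_def[abs_def])
    have VK: "V k \<in> Fclass (osucc b)" if k: "k \<in> K" for k
    proof -
      have c: "[] @ [k] \<in> T" using k unfolding K_def by simp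
      obtain lk nk where lk: "limit_or_zero lk" and bk: "node_rank T [k] = oadd_nat lk nk"
        using decomp_exists[OF node_rank_in[OF w]] by blast
      have "(osucc (node_rank T [k]), osucc b0) \<in> W" using child_rank[OF w c] r0 unfolding b0_def by simp
      then have "(node_rank T [k], b0) \<in> W" using osucc_mono_rev node_rank_in[OF w] b0F by blast
      then have le: "(oadd_nat lk (2*nk), b) \<in> W" using C2[OF lz lk] bk b0e unfolding b_def by simp
      have "R_op (subtree T [k]) (\<lambda>u. C (s @ u)) \<in> Fclass (oadd_nat lk (2*nk))" for s
      proof -
        have cl': "\<forall>s'. closed ((\<lambda>u. C (s @ u)) s')" using cl by simp
        have m: "[k] \<in> T" using c by simp
        show ?thesis using spec[OF spec[OF spec[OF main_i[OF tree w, of "[k]"], of "\<lambda>u. C (s @ u)"], of lk], of nk] m cl' lk bk by blast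
      qed
      then have "\<forall>s. R_op (subtree T [k]) (\<lambda>u. C (s @ u)) \<in> Fclass (oadd_nat l (2*n'))"
        using Fmono_le[OF le] unfolding b_def by blast
      then have "V k \<in> Fclass (oadd_nat l (Suc (2*n')))" unfolding V_def by (rule level_odd[OF lz])
      then show ?thesis unfolding b_def by simp
    qed
    have cb: "C [] \<in> Fclass (osucc b)" using closed_F cl osucc_in[OF bF] by blast
    have "C [] \<inter> (\<Inter>k\<in>K. V k) \<in> Fclass (osucc b)"
      using fin_int[OF finK, of "\<lambda>X. X \<in> Fclass (osucc b)"] cb VK Fint_odd[OF bF _ bodd] beven by blast
    moreover have "oadd_nat l (2 * n - 1) = osucc b" unfolding b_def n' by simp
    ultimately show ?thesis using dec n' by simp
  qed
  show ?thesis using P1 P2 by blast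
qed

end
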